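(* For any finite alphabet $\mathcal{X}$ with $|\mathcal{X}|\ge2$ and any pmf $P$ on $\mathcal{X}$, the minimum average age $\bar A^*=\inf_e \bar A(e)$ over all prefix-free codes $e:\mathcal{X}\to\{0,1\}^*$ satisfies $$\frac32 H(P)-\frac12\le \bar A^*\le \frac32\log_2|\mathcal{X}|+1,$$ where $H(P)=-\sum_x P(x)\log_2 P(x)$.
   Context: For a prefix-free code $e$ with codeword lengths $\ell(x)$ and $L=\ell(X)$, $X\sim P$, the average age of the (deterministic) memoryless update scheme is $\bar A(e)=\mathbb{E}[L]+\frac{\mathbb{E}[L^2]}{2\mathbb{E}[L]}-\frac12$. *)

theory Defs
  imports "HOL-Probability.Probability" "HOL-Library.Sublist"
begin

definition prefix_free :: "('a \<Rightarrow> bool list) \<Rightarrow> bool" where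
  "prefix_free e \<longleftrightarrow> (\<forall>x y. x \<noteq> y \<longrightarrow> \<not> prefix (e x) (e y))"

definition exp_len :: "'a::finite pmf \<Rightarrow> ('a \<Rightarrow> bool list) \<Rightarrow> real" where
  "exp_len P e = (\<Sum>x\<in>UNIV. pmf P x * real (length (e x)))"

definition exp_len_sq :: "'a::finite pmf \<Rightarrow> ('a \<Rightarrow> bool list) \<Rightarrow> real" where
  "exp_len_sq P e = (\<Sum>x\<in>UNIV. pmf P x * (real (length (e x)))^2)"

definition avg_age :: "'a::finite pmf \<Rightarrow> ('a \<Rightarrow> bool list) \<Rightarrow> real" where
  "avg_age P e = exp_len P e + exp_len_sq P e / (2 * exp_len P e) - 1/2"

definition min_avg_age :: "'a::finite pmf \<Rightarrow> real" where
  "min_avg_age P = Inf {avg_age P e | e. prefix_free e}"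

text \<open>Shannon entropy in bits (convention 0 log 0 = 0, since log 2 0 = 0 in Isabelle).\<close>
definition entropy2 :: "'a::finite pmf \<Rightarrow> real" where
  "entropy2 P = - (\<Sum>x\<in>UNIV. pmf P x * log 2 (pmf P x))"

end

theory Submission
  imports Defs
begin

lemma card_bl: "card {u::bool list. length u = k} = 2 ^ k"
  using card_lists_length_eq[of "UNIV::bool set" k] by simp

lemma fin_bl: "finite {u::bool list. length u = k}"
  using finite_lists_length_eq[of "UNIV::bool set" k] by simp

lemma pf_nonempty:
  fixes e :: "'a::finite \<Rightarrow> bool list"
  assumes "CARD('a) \<ge> 2" "prefix_free e"
  shows "length (e x) \<ge> 1"
proof (rule ccontr)
  assume "\<not> length (e x) \<ge> 1"
  hence ex: "e x = []" by (simp add: Suc_le_eq)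
  obtain y :: 'a where "y \<noteq> x"
  proof -
    have "card (UNIV - {x}) \<ge> 1" using assms(1) by (simp add: card_Diff_singleton)
    then obtain y where "y \<in> UNIV - {x}" by (metis card.empty ex_in_conv not_one_le_zero)
    thus ?thesis using that by blast
  qed
  thus False using assms(2) ex unfolding prefix_free_def by (metis Nil_prefix)
qed

lemma card_ext:
  "card {v::bool list. length v = m \<and> prefix w v} = (if length w \<le> m then 2 ^ (m - length w) else 0)"
proof (cases "length w \<le> m")
  case True
  have "{v::bool list. length v = m \<and> prefix w v} = (\<lambda>u. w @ u) ` {u. set u \<subseteq> UNIV \<and> length u = m - length w}"
    using True by (auto simp: prefix_def)
  moreover have "card ((\<lambda>u. w @ u) ` {u::bool list. set u \<subseteq> UNIV \<and> length u = m - length w}) = 2 ^ (m - length w)"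
    by (subst card_image) (auto simp: inj_on_def card_bl)
  ultimately show ?thesis using True by simp
next
  case False
  hence "{v::bool list. length v = m \<and> prefix w v} = {}" by (auto dest: prefix_length_le)
  thus ?thesis using False by (simp only: card.empty if_False)
qed

lemma kraft:
  fixes e :: "'a::finite \<Rightarrow> bool list"
  assumes "prefix_free e"
  shows "(\<Sum>x\<in>UNIV. (1/2::real) ^ length (e x)) \<le> 1"
proof -
  define m where "m = Max (range (\<lambda>x. length (e x)))"
  have lm: "length (e x) \<le> m" for x unfolding m_def by simp
  define S where "S x = {v::bool list. length v = m \<and> prefix (e x) v}" for x
  have cS: "card (S x) = 2 ^ (m - length (e x))" for x using card_ext lm unfolding S_def by simp
  have disj: "disjoint_family_on S UNIV"
    unfolding disjoint_family_on_def S_def using assms unfolding prefix_free_def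
    by (auto dest: prefix_same_cases)
  have fin: "finite (S x)" for x
  proof -
    have "S x \<subseteq> {u. set u \<subseteq> (UNIV::bool set) \<and> length u = m}" unfolding S_def by auto
    thus ?thesis by (rule finite_subset) (simp add: fin_bl)
  qed
  have "(\<Sum>x\<in>UNIV. card (S x)) = card (\<Union>x. S x)"
    using card_UN_disjoint' [OF disj] fin by simp
  also have "\<dots> \<le> card {u. set u \<subseteq> (UNIV::bool set) \<and> length u = m}"
    by (rule card_mono) (auto simp: fin_bl S_def)
  also have "\<dots> = 2 ^ m" using card_bl by simp
  finally have nat: "(\<Sum>x\<in>UNIV. (2::nat) ^ (m - length (e x))) \<le> 2 ^ m" using cS by simp
  hence "(\<Sum>x\<in>UNIV. (2::real) ^ (m - length (e x))) \<le> 2 ^ m"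
    by (metis (mono_tags, lifting) of_nat_le_iff of_nat_numeral of_nat_power of_nat_sum sum.cong)
  moreover have "(2::real) ^ (m - length (e x)) = 2 ^ m * (1/2) ^ length (e x)" for x
    using lm[of x] by (simp add: power_diff power_one_over divide_simps)
  ultimately have "2 ^ m * (\<Sum>x\<in>UNIV. (1/2::real) ^ length (e x)) \<le> 2 ^ m * 1"
    by (simp add: sum_distrib_left)
  thus ?thesis by simp
qed

lemma gibbs_term:
  fixes p q :: real
  assumes "p \<ge> 0" "q > 0"
  shows "p * (log 2 q - log 2 p) \<le> (q - p) / ln 2"
proof (cases "p = 0")
  case True thus ?thesis using assms by simp
next
  case False
  hence p: "p > 0" using assms by simp
  have "log 2 q - log 2 p = ln (q/p) / ln 2" using p assms by (simp add: log_def ln_div diff_divide_distrib)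
  moreover have "ln (q/p) \<le> q/p - 1" using p assms by (intro ln_le_minus_one) simp
  ultimately have "log 2 q - log 2 p \<le> (q/p - 1) / ln 2" by (simp add: divide_right_mono)
  hence "p * (log 2 q - log 2 p) \<le> p * ((q/p - 1) / ln 2)" using p by (intro mult_left_mono) auto
  also have "\<dots> = (q - p) / ln 2" using p by (simp add: field_simps)
  finally show ?thesis .
qed

lemma sum_pmf1: "(\<Sum>x\<in>UNIV. pmf (P::'a::finite pmf) x) = 1"
  by (rule sum_pmf_eq_1) auto

lemma entropy_le_len:
  fixes P :: "'a::finite pmf"
  assumes "prefix_free e"
  shows "entropy2 P \<le> exp_len P e"
proof -
  define q where "q x = (1/2::real) ^ length (e x)" for x
  have lq: "log 2 (q x) = - real (length (e x))" for x
    unfolding q_def by (simp add: log_nat_power log_divide)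
  have "entropy2 P - exp_len P e = (\<Sum>x\<in>UNIV. pmf P x * (log 2 (q x) - log 2 (pmf P x)))"
    unfolding entropy2_def exp_len_def lq
    by (simp add: sum_negf[symmetric] sum_subtractf[symmetric] algebra_simps)
       (rule sum.cong; simp add: algebra_simps)
  also have "\<dots> \<le> (\<Sum>x\<in>UNIV. (q x - pmf P x) / ln 2)"
    by (rule sum_mono, rule gibbs_term) (auto simp: q_def)
  also have "\<dots> = ((\<Sum>x\<in>UNIV. q x) - 1) / ln 2"
    by (simp add: sum_divide_distrib[symmetric] sum_subtractf sum_pmf1)
  also have "\<dots> \<le> 0" using kraft[OF assms] unfolding q_def by (simp add: divide_nonpos_pos)
  finally show ?thesis by simp
qed

lemma lower_one:
  fixes P :: "'a::finite pmf"
  assumes "CARD('a) \<ge> 2" "prefix_free e"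
  shows "3/2 * entropy2 P - 1/2 \<le> avg_age P e"
proof -
  define m where "m = exp_len P e"
  have "m \<ge> (\<Sum>x\<in>UNIV. pmf P x * 1)" unfolding m_def exp_len_def
  proof (rule sum_mono)
    fix x
    have "real (length (e x)) \<ge> 1" using pf_nonempty[OF assms, of x] by simp
    thus "pmf P x * 1 \<le> pmf P x * real (length (e x))" by (intro mult_left_mono) auto
  qed
  hence m1: "m \<ge> 1" using sum_pmf1[of P] by simp
  have "0 \<le> (\<Sum>x\<in>UNIV. pmf P x * (real (length (e x)) - m)^2)"
    by (rule sum_nonneg) simp
  also have "\<dots> = exp_len_sq P e - 2 * m * exp_len P e + m^2 * (\<Sum>x\<in>UNIV. pmf P x)"
    unfolding exp_len_sq_def exp_len_def
    by (simp add: power2_diff algebra_simps sum.distrib sum_subtractf sum_distrib_left sum_distrib_right)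
  finally have sq: "exp_len_sq P e \<ge> m^2" using sum_pmf1[of P] unfolding m_def
    by (simp add: power2_eq_square)
  have "exp_len_sq P e / (2*m) \<ge> m^2/(2*m)" using m1 sq by (simp add: divide_right_mono)
  moreover have "m^2/(2*m) = m/2" using m1 by (simp add: power2_eq_square)
  moreover have "entropy2 P \<le> m" unfolding m_def by (rule entropy_le_len[OF assms(2)])
  ultimately show ?thesis unfolding avg_age_def m_def[symmetric] by linarith
qed

lemma upper_code:
  assumes "CARD('a::finite) \<ge> 2"
  shows "\<exists>e::'a \<Rightarrow> bool list. prefix_free e \<and> avg_age (P::'a pmf) e \<le> 3/2 * log 2 (real CARD('a)) + 1"
proof -
  define n where "n = CARD('a)"
  define k where "k = nat \<lceil>log 2 (real n)\<rceil>"
  have n2: "real n \<ge> 2" using assms unfolding n_def by simp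
  have lpos: "log 2 (real n) \<ge> 1" using n2 by simp
  have kr: "real k = \<lceil>log 2 (real n)\<rceil>" unfolding k_def using lpos by simp
  have "real n = 2 powr log 2 (real n)" using n2 by simp
  also have "\<dots> \<le> 2 powr real k" using kr by (intro powr_mono) auto
  also have "\<dots> = 2 ^ k" by (simp add: powr_realpow)
  finally have "n \<le> 2 ^ k" by (metis of_nat_le_iff of_nat_numeral of_nat_power)
  hence "card (UNIV::'a set) \<le> card {u. set u \<subseteq> (UNIV::bool set) \<and> length u = k}"
    using card_bl[of k] by (simp add: n_def)
  then obtain f where f: "f ` UNIV \<subseteq> {u. set u \<subseteq> (UNIV::bool set) \<and> length u = k}" "inj_on f (UNIV::'a set)"
    using card_le_inj[of "UNIV::'a set" "{u::bool list. length u = k}"] by (auto simp: fin_bl)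
  have len: "length (f x) = k" for x using f(1) by auto
  have pf: "prefix_free f" unfolding prefix_free_def
  proof (intro allI impI)
    fix x y :: 'a assume "x \<noteq> y"
    hence "f x \<noteq> f y" using f(2) by (auto simp: inj_on_def)
    thus "\<not> prefix (f x) (f y)" using len[of x] len[of y] by (auto simp: prefix_def dest: arg_cong[of _ _ length])
  qed
  have el: "exp_len P f = k" unfolding exp_len_def len
    by (simp add: sum_distrib_right[symmetric] sum_pmf1)
  have esq: "exp_len_sq P f = k^2" unfolding exp_len_sq_def len
    by (simp add: sum_distrib_right[symmetric] sum_pmf1)
  have kp: "real k \<ge> 1" using kr lpos by linarith
  have "avg_age P f = 3/2 * k - 1/2" unfolding avg_age_def el esq using kp
    by (simp add: power2_eq_square field_simps)
  also have "\<dots> \<le> 3/2 * log 2 (real n) + 1" using kr by linarith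
  finally show ?thesis using pf n_def by blast
qed

theorem mainTheorem3:
  fixes P :: "'a::finite pmf"
  assumes "CARD('a) \<ge> 2"
  shows "3/2 * entropy2 P - 1/2 \<le> min_avg_age P
         \<and> min_avg_age P \<le> 3/2 * log 2 (real CARD('a)) + 1"
proof -
  obtain e0 where e0: "prefix_free e0" "avg_age P e0 \<le> 3/2 * log 2 (real CARD('a)) + 1"
    using upper_code[OF assms] by blast
  let ?S = "{avg_age P e | e. prefix_free e}"
  have ne: "?S \<noteq> {}" using e0 by blast
  have lb: "\<And>y. y \<in> ?S \<Longrightarrow> 3/2 * entropy2 P - 1/2 \<le> y" using lower_one[OF assms] by blast
  have bdd: "bdd_below ?S" using lb by (auto simp: bdd_below_def)
  have "3/2 * entropy2 P - 1/2 \<le> Inf ?S" by (rule cInf_greatest[OF ne lb])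
  moreover have "Inf ?S \<le> avg_age P e0" by (rule cInf_lower) (use e0 bdd in auto)
  ultimately show ?thesis unfolding min_avg_age_def using e0 by linarith
qed

end
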